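(* Let $\mathcal{X}$ and $\mathcal{A}=\mathcal{B}$ be finite sets and let $P_{XAB}$ be a probability distribution on $\mathcal{X}\times\mathcal{A}\times\mathcal{B}$ such that (i) the marginal $P_X$ is uniform on $\mathcal{X}$; (ii) $P_{AB|X}=P_{A|X}P_{B|X}$, i.e. $P_{XAB}(x,a,b)=P_X(x)P_{A|X}(a|x)P_{B|X}(b|x)$; (iii) $P_{A|X}=P_{B|X}$. For functions $f\colon\mathcal{A}\to\mathcal{X}$, $g\colon\mathcal{B}\to\mathcal{X}$ let $$W(f,g)=\sum_{x\in\mathcal{X},a\in\mathcal{A},b\in\mathcal{B}}P_{XAB}(x,a,b)\,\delta[f(a)=g(b)=x].$$ Then there exists a function $f\colon\mathcal{A}\to\mathcal{X}$ such that $W(f,f)=\max_{f',g'}W(f',g')$, where the maximum ranges over all pairs of functions $f'\colon\mathcal{A}\to\mathcal{X}$, $g'\colon\mathcal{B}\to\mathcal{X}$. In other words, the classical LSSD game defined by $P_{XAB}$ has an optimal deterministic strategy that is symmetric.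
   Context: $\delta[\cdot]$ denotes the indicator function, equal to $1$ if its argument is true and $0$ otherwise. In the (two-player, classical) local simultaneous state discrimination (LSSD) game defined by $P_{XAB}$, a referee samples $(x,a,b)\sim P_{XAB}$ and gives $a$ to Alice and $b$ to Bob; without communicating, they output guesses of $x$ and win iff both guesses equal $x$. A deterministic strategy is a pair of functions $(f,g)$ with winning probability $W(f,g)$; it is symmetric if $f=g$. *)

theory Defs
  imports Complex_Main
begin

definition delta :: "bool \<Rightarrow> real" where
  "delta b = (if b then 1 else 0)"

definition W :: "('x::finite \<Rightarrow> 'a::finite \<Rightarrow> 'b::finite \<Rightarrow> real) \<Rightarrow> ('a \<Rightarrow> 'x) \<Rightarrow> ('b \<Rightarrow> 'x) \<Rightarrow> real" where
  "W P f g = (\<Sum>x\<in>UNIV. \<Sum>a\<in>UNIV. \<Sum>b\<in>UNIV. P x a b * delta (f a = x \<and> g b = x))"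

end

theory Submission
  imports Defs
begin

lemma W_factor:
  fixes P :: "'X::finite \<Rightarrow> 'A::finite \<Rightarrow> 'A \<Rightarrow> real"
  assumes P_prod: "\<And>x a b. P x a b = PX x * Q x a * Q x b"
  shows "W P f g = (\<Sum>x\<in>UNIV. PX x * ((\<Sum>a\<in>UNIV. Q x a * delta (f a = x)) * (\<Sum>b\<in>UNIV. Q x b * delta (g b = x))))"
proof -
  have "W P f g = (\<Sum>x\<in>UNIV. \<Sum>a\<in>UNIV. \<Sum>b\<in>UNIV. PX x * ((Q x a * delta (f a = x)) * (Q x b * delta (g b = x))))"
    unfolding W_def P_prod by (intro sum.cong refl) (simp add: delta_def)
  also have "\<dots> = (\<Sum>x\<in>UNIV. PX x * ((\<Sum>a\<in>UNIV. Q x a * delta (f a = x)) * (\<Sum>b\<in>UNIV. Q x b * delta (g b = x))))"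
  proof (intro sum.cong refl)
    fix x
    show "(\<Sum>a\<in>UNIV. \<Sum>b\<in>UNIV. PX x * ((Q x a * delta (f a = x)) * (Q x b * delta (g b = x)))) = PX x * ((\<Sum>a\<in>UNIV. Q x a * delta (f a = x)) * (\<Sum>b\<in>UNIV. Q x b * delta (g b = x)))"
      by (subst sum_product) (simp add: sum_distrib_left)
  qed
  finally show ?thesis .
qed

theorem mainTheorem1:
  fixes P :: "'X::finite \<Rightarrow> 'A::finite \<Rightarrow> 'A \<Rightarrow> real"
    and PX :: "'X \<Rightarrow> real"
    and Q :: "'X \<Rightarrow> 'A \<Rightarrow> real"
  assumes P_nonneg: "\<And>x a b. P x a b \<ge> 0"
    and P_sum: "(\<Sum>x\<in>UNIV. \<Sum>a\<in>UNIV. \<Sum>b\<in>UNIV. P x a b) = 1"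
    and PX_marg: "\<And>x. PX x = (\<Sum>a\<in>UNIV. \<Sum>b\<in>UNIV. P x a b)"
    and PX_uniform: "\<And>x. PX x = 1 / real (card (UNIV :: 'X set))"
    and Q_nonneg: "\<And>x a. Q x a \<ge> 0"
    and Q_sum: "\<And>x. (\<Sum>a\<in>UNIV. Q x a) = 1"
    and P_prod: "\<And>x a b. P x a b = PX x * Q x a * Q x b"
  shows "\<exists>f :: 'A \<Rightarrow> 'X. W P f f = Max {W P f' g' | f' g'. True}"
proof -
  define S where "S = (\<lambda>(f::'A \<Rightarrow> 'X) x. \<Sum>a\<in>UNIV. Q x a * delta (f a = x))"
  have PXnn: "PX x \<ge> 0" for x using PX_uniform[of x] by simp
  have Wf: "W P f g = (\<Sum>x\<in>UNIV. PX x * (S f x * S g x))" for f g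
    unfolding S_def by (simp add: W_factor[OF P_prod])
  have avg: "W P f g \<le> (W P f f + W P g g) / 2" for f g
  proof -
    have "PX x * (S f x * S g x) \<le> (PX x * (S f x * S f x) + PX x * (S g x * S g x)) / 2" for x
    proof -
      have "2 * (S f x * S g x) \<le> S f x * S f x + S g x * S g x"
        using sum_squares_ge_zero[of "S f x - S g x" 0] by (simp add: algebra_simps power2_eq_square)
      then have "PX x * (2 * (S f x * S g x)) \<le> PX x * (S f x * S f x + S g x * S g x)"
        using PXnn[of x] mult_left_mono by blast
      then show ?thesis by (simp add: algebra_simps)
    qed
    then have "(\<Sum>x\<in>UNIV. PX x * (S f x * S g x)) \<le> (\<Sum>x\<in>UNIV. (PX x * (S f x * S f x) + PX x * (S g x * S g x)) / 2)"
      by (rule sum_mono)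
    also have "\<dots> = (W P f f + W P g g) / 2"
      unfolding Wf by (simp add: sum.distrib sum_divide_distrib[symmetric])
    finally show ?thesis unfolding Wf .
  qed
  define M where "M = {W P f' g' | f' g'. True}"
  have M_eq: "M = (\<lambda>(f,g). W P f g) ` UNIV" unfolding M_def by auto
  have fin: "finite M" unfolding M_eq by simp
  have ne: "M \<noteq> {}" unfolding M_eq by simp
  have "Max M \<in> M" using fin ne by (rule Max_in)
  then obtain f0 g0 where fg: "Max M = W P f0 g0" unfolding M_def by auto
  have le: "W P f f \<le> Max M" for f using fin unfolding M_def by (intro Max_ge) auto
  show ?thesis
  proof (cases "W P f0 f0 \<ge> W P g0 g0")
    case True
    have a1: "W P f0 g0 \<le> (W P f0 f0 + W P g0 g0) / 2" by (rule avg)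
    have a2: "W P f0 f0 \<le> Max M" by (rule le)
    have "W P f0 f0 = Max M" using True a1 a2 fg
      by simp
    then show ?thesis unfolding M_def by blast
  next
    case False
    have a1: "W P f0 g0 \<le> (W P f0 f0 + W P g0 g0) / 2" by (rule avg)
    have a2: "W P g0 g0 \<le> Max M" by (rule le)
    have "W P g0 g0 = Max M" using False a1 a2 fg by simp
    then show ?thesis unfolding M_def by blast
  qed
qed

end
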